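(* In the uncorrelated-signals setting of the context with $|V|=n$, assume common knowledge of beliefs (for all $u,w\in V$, $X_u$ is a.s.\ $\mathcal{F}_w$-measurable) and let $X$ be such that almost surely $X=X_u$ for all $u\in V$. Then $$\mathrm{Var}(X-S)\le\frac{D}{n+D},$$ where $D=D(\mu_1,\mu_0)$ is the noise to signal ratio.
   Context: The state $S$ is uniform on $\{0,1\}$. $\mu_0\neq\mu_1$ are mutually absolutely continuous probability measures on $(\Omega,\mathcal{O})$, and $z(\omega)=\log\frac{d\mu_1}{d\mu_0}(\omega)$; assume $z$ has finite second moment under both $\mu_0$ and $\mu_1$. Uncorrelated-signals setting: $V$ is a set of $n$ agents, agent $u$ has private signal $W_u\in\Omega$; conditionally on $S$, each $W_u$ has law $\mu_S$ (the joint law may be dependent), and with $z_u=z(W_u)$ one has $\mathrm{Cov}(z_u,z_v\mid S)=0$ for all distinct $u,v\in V$. Each agent's information is a $\sigma$-algebra $\mathcal{F}_u$ with $\sigma(W_u)\subseteq\mathcal{F}_u\subseteq\sigma(W_v:v\in V)$, and $X_u=\mathbb{P}(S=1\mid\mathcal{F}_u)$. The noise to signal ratio is $$D(\mu_1,\mu_0)=2\,\frac{\mathrm{Var}_{\mu_1}(z)+\mathrm{Var}_{\mu_0}(z)}{\big(D_{KL}(\mu_1\|\mu_0)+D_{KL}(\mu_0\|\mu_1)\big)^2}.$$ *)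

theory Defs
  imports "HOL-Probability.Probability"
begin

text \<open>Log-likelihood ratio z = log (d mu1 / d mu0) (natural logarithm).\<close>
definition llr :: "'b measure \<Rightarrow> 'b measure \<Rightarrow> 'b \<Rightarrow> real" where
  "llr mu0 mu1 w = ln (enn2real (RN_deriv mu0 mu1 w))"

definition var_under :: "'b measure \<Rightarrow> ('b \<Rightarrow> real) \<Rightarrow> real" where
  "var_under P f = (\<integral>x. (f x - (\<integral>y. f y \<partial>P))\<^sup>2 \<partial>P)"

definition noise_signal_ratio :: "'b measure \<Rightarrow> 'b measure \<Rightarrow> real" where
  "noise_signal_ratio mu1 mu0 =
     2 * (var_under mu1 (llr mu0 mu1) + var_under mu0 (llr mu0 mu1)) /
     (KL_divergence (exp 1) mu0 mu1 + KL_divergence (exp 1) mu1 mu0)\<^sup>2"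

definition cond_ev :: "'a measure \<Rightarrow> 'a set \<Rightarrow> ('a \<Rightarrow> real) \<Rightarrow> real" where
  "cond_ev M A f = (\<integral>x. f x * indicator A x \<partial>M) / measure M A"

definition cond_cov :: "'a measure \<Rightarrow> 'a set \<Rightarrow> ('a \<Rightarrow> real) \<Rightarrow> ('a \<Rightarrow> real) \<Rightarrow> real" where
  "cond_cov M A f g = cond_ev M A (\<lambda>x. f x * g x) - cond_ev M A f * cond_ev M A g"

end

theory Submission
  imports Defs
begin

lemma absprod_le: "\<bar>(a::real) * b\<bar> \<le> a\<^sup>2 + b\<^sup>2"
proof -
  have "0 \<le> (\<bar>a\<bar> - \<bar>b\<bar>)\<^sup>2" by simp
  then have "2 * (\<bar>a\<bar> * \<bar>b\<bar>) \<le> a\<^sup>2 + b\<^sup>2"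
    by (simp add: power2_eq_square algebra_simps abs_mult_self_eq)
  moreover have "0 \<le> \<bar>a\<bar> * \<bar>b\<bar>" by simp
  ultimately show ?thesis unfolding abs_mult by linarith
qed

lemma KL_pos_ac:
  assumes M: "prob_space M" and N: "prob_space N"
    and ac: "absolutely_continuous M N" "sets N = sets M"
    and int: "integrable N (entropy_density (exp 1) M N)"
  shows "0 \<le> KL_divergence (exp 1) M N" "N \<noteq> M \<Longrightarrow> 0 < KL_divergence (exp 1) M N"
proof -
  interpret information_space M "exp 1"
    using M by (simp add: information_space_def information_space_axioms_def)
  interpret N: prob_space N by fact
  have "finite_measure N" by unfold_locales
  from real_RN_deriv[OF this ac] obtain D
    where D:
      "random_variable borel D"
      "AE x in M. RN_deriv M N x = ennreal (D x)"
      "AE x in N. 0 < D x"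
      "\<And>x. 0 \<le> D x"
    by this auto
  have "N = density M (RN_deriv M N)"
    using ac by (rule density_RN_deriv[symmetric])
  also have "\<dots> = density M D"
    using D by (auto intro!: density_cong)
  finally have N: "N = density M D" .
  from absolutely_continuous_AE[OF ac(2,1) D(2)] D b_gt_1 ac measurable_entropy_density
  have "integrable N (\<lambda>x. log (exp 1) (D x))"
    by (intro integrable_cong_AE[THEN iffD2, OF _ _ _ int])
       (auto simp: N entropy_density_def)
  with D b_gt_1 have i: "integrable M (\<lambda>x. D x * log (exp 1) (D x))"
    by (subst integrable_real_density[symmetric]) (auto simp: N[symmetric] comp_def)
  show "0 \<le> KL_divergence (exp 1) M N"
    unfolding N using \<open>prob_space N\<close> D i by (intro KL_nonneg) (auto simp: N)
  show "N \<noteq> M \<Longrightarrow> 0 < KL_divergence (exp 1) M N"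
    unfolding N using \<open>prob_space N\<close> D i by (intro KL_gt_0) (auto simp: N)
qed


lemma RN_inv:
  assumes m0: "prob_space mu0" and m1: "prob_space mu1"
    and sets_eq: "sets mu1 = sets mu0"
    and ac01: "absolutely_continuous mu0 mu1"
    and ac10: "absolutely_continuous mu1 mu0"
  shows "AE x in mu0. 0 < enn2real (RN_deriv mu0 mu1 x) \<and>
     enn2real (RN_deriv mu1 mu0 x) = 1 / enn2real (RN_deriv mu0 mu1 x)"
proof -
  interpret P0: prob_space mu0 by fact
  interpret P1: prob_space mu1 by fact
  define r where "r = RN_deriv mu0 mu1"
  have rm[measurable]: "r \<in> borel_measurable mu0" unfolding r_def by simp
  have dens: "density mu0 r = mu1" unfolding r_def
    using P0.density_RN_deriv[OF ac01 sets_eq] .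
  have fin: "AE x in mu0. r x \<noteq> \<infinity>" unfolding r_def
    using P0.RN_deriv_finite[OF _ ac01 sets_eq] P1.sigma_finite_measure_axioms by blast
  have z: "emeasure mu1 {x\<in>space mu0. r x = 0} = 0"
  proof -
    have "emeasure mu1 {x\<in>space mu0. r x = 0} = emeasure (density mu0 r) {x\<in>space mu0. r x = 0}"
      using dens by simp
    also have "\<dots> = (\<integral>\<^sup>+x. r x * indicator {x\<in>space mu0. r x = 0} x \<partial>mu0)"
      by (subst emeasure_density) auto
    also have "\<dots> = (\<integral>\<^sup>+x. 0 \<partial>mu0)"
      by (intro nn_integral_cong) (auto split: split_indicator)
    finally show ?thesis by simp
  qed
  have "AE x in mu1. r x \<noteq> 0"
  proof (rule AE_I[where N="{x\<in>space mu0. r x = 0}"])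
    show "{x \<in> space mu1. \<not> r x \<noteq> 0} \<subseteq> {x \<in> space mu0. r x = 0}"
      using sets_eq_imp_space_eq[OF sets_eq] by auto
    show "emeasure mu1 {x \<in> space mu0. r x = 0} = 0" by (rule z)
    show "{x \<in> space mu0. r x = 0} \<in> sets mu1" unfolding sets_eq by measurable
  qed
  then have nz: "AE x in mu0. r x \<noteq> 0"
    using absolutely_continuous_AE[OF sets_eq[symmetric] ac10] by blast
  define D where "D x = enn2real (r x)" for x
  have Dm[measurable]: "D \<in> borel_measurable mu0" unfolding D_def by simp
  have rD: "AE x in mu0. r x = ennreal (D x) \<and> 0 < D x"
    using fin nz by eventually_elim (auto simp: D_def enn2real_positive_iff less_top zero_less_iff_neq_zero)
  have "density mu1 (\<lambda>x. ennreal (1 / D x)) = density (density mu0 r) (\<lambda>x. ennreal (1 / D x))"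
    using dens by simp
  also have "\<dots> = density mu0 (\<lambda>x. r x * ennreal (1 / D x))"
    by (rule density_density_eq) auto
  also have "\<dots> = density mu0 (\<lambda>x. 1)"
  proof (intro density_cong)
    show "AE x in mu0. r x * ennreal (1 / D x) = 1" using rD
    proof eventually_elim
      case (elim x) then show ?case by (simp add: ennreal_mult[symmetric])
    qed
  qed auto
  also have "\<dots> = mu0" by (simp add: density_1)
  finally have "density mu1 (\<lambda>x. ennreal (1 / D x)) = mu0" .
  then have "AE x in mu1. ennreal (1 / D x) = RN_deriv mu1 mu0 x"
  proof (intro P1.RN_deriv_unique)
    show "(\<lambda>x. ennreal (1 / D x)) \<in> borel_measurable mu1"
      by (subst measurable_cong_sets[OF sets_eq refl]) simp
  qed
  then have "AE x in mu0. ennreal (1 / D x) = RN_deriv mu1 mu0 x"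
    using absolutely_continuous_AE[OF sets_eq[symmetric] ac10] by blast
  then show ?thesis using rD
  proof eventually_elim
    case (elim x)
    have e: "D x = enn2real (RN_deriv mu0 mu1 x)" by (simp add: D_def r_def)
    have "enn2real (RN_deriv mu1 mu0 x) = 1 / D x"
      using elim(1)[symmetric] elim(2) by simp
    then show ?case using elim(2) e by simp
  qed
qed

lemma var_under_eq:
  assumes "prob_space P" "f \<in> borel_measurable P" "integrable P (\<lambda>x. (f x)\<^sup>2)"
  shows "var_under P f = (\<integral>x. (f x)\<^sup>2 \<partial>P) - (\<integral>x. f x \<partial>P)\<^sup>2"
proof -
  interpret prob_space P by fact
  have "integrable P f" using assms(2,3) by (rule square_integrable_imp_integrable)
  then show ?thesis unfolding var_under_def using variance_eq[of f] assms(3) by simp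
qed

lemma mu_facts:
  assumes m0: "prob_space mu0" and m1: "prob_space mu1"
    and sets_eq: "sets mu1 = sets mu0"
    and neq: "mu0 \<noteq> mu1"
    and ac01: "absolutely_continuous mu0 mu1"
    and ac10: "absolutely_continuous mu1 mu0"
    and sq0: "integrable mu0 (\<lambda>w. (llr mu0 mu1 w)\<^sup>2)"
    and sq1: "integrable mu1 (\<lambda>w. (llr mu0 mu1 w)\<^sup>2)"
  shows "llr mu0 mu1 \<in> borel_measurable mu0" "llr mu0 mu1 \<in> borel_measurable mu1"
    "integrable mu0 (llr mu0 mu1)" "integrable mu1 (llr mu0 mu1)"
    "KL_divergence (exp 1) mu0 mu1 = (\<integral>w. llr mu0 mu1 w \<partial>mu1)"
    "KL_divergence (exp 1) mu1 mu0 = - (\<integral>w. llr mu0 mu1 w \<partial>mu0)"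
    "(\<integral>w. llr mu0 mu1 w \<partial>mu0) < (\<integral>w. llr mu0 mu1 w \<partial>mu1)"
    "var_under mu0 (llr mu0 mu1) = (\<integral>w. (llr mu0 mu1 w)\<^sup>2 \<partial>mu0) - (\<integral>w. llr mu0 mu1 w \<partial>mu0)\<^sup>2"
    "var_under mu1 (llr mu0 mu1) = (\<integral>w. (llr mu0 mu1 w)\<^sup>2 \<partial>mu1) - (\<integral>w. llr mu0 mu1 w \<partial>mu1)\<^sup>2"
proof -
  interpret P0: prob_space mu0 by fact
  interpret P1: prob_space mu1 by fact
  show zm0: "llr mu0 mu1 \<in> borel_measurable mu0" unfolding llr_def by simp
  then show zm1: "llr mu0 mu1 \<in> borel_measurable mu1"
    by (subst measurable_cong_sets[OF sets_eq refl])
  show i0: "integrable mu0 (llr mu0 mu1)" using zm0 sq0 by (rule P0.square_integrable_imp_integrable)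
  show i1: "integrable mu1 (llr mu0 mu1)" using zm1 sq1 by (rule P1.square_integrable_imp_integrable)
  have ed: "entropy_density (exp 1) mu0 mu1 = llr mu0 mu1"
    by (simp add: fun_eq_iff entropy_density_def llr_def log_def)
  show kl1: "KL_divergence (exp 1) mu0 mu1 = (\<integral>w. llr mu0 mu1 w \<partial>mu1)"
    unfolding KL_divergence_def ed ..
  have ae: "AE x in mu0. entropy_density (exp 1) mu1 mu0 x = - llr mu0 mu1 x"
    using RN_inv[OF m0 m1 sets_eq ac01 ac10]
    by eventually_elim (simp add: entropy_density_def llr_def log_def ln_div)
  have ed0m: "entropy_density (exp 1) mu1 mu0 \<in> borel_measurable mu0"
    by (subst measurable_cong_sets[OF sets_eq[symmetric] refl]) simp
  have int0: "integrable mu0 (entropy_density (exp 1) mu1 mu0)"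
    using i0 ae ed0m by (subst integrable_cong_AE[OF ed0m _ ae]) (auto simp: zm0)
  show kl0: "KL_divergence (exp 1) mu1 mu0 = - (\<integral>w. llr mu0 mu1 w \<partial>mu0)"
    unfolding KL_divergence_def using integral_cong_AE[OF ed0m _ ae] zm0 by simp
  have "0 < KL_divergence (exp 1) mu0 mu1"
    using KL_pos_ac(2)[OF m0 m1 ac01 sets_eq] neq ed i1 by auto
  moreover have "0 \<le> KL_divergence (exp 1) mu1 mu0"
    using KL_pos_ac(1)[OF m1 m0 ac10 sets_eq[symmetric] int0] .
  ultimately show "(\<integral>w. llr mu0 mu1 w \<partial>mu0) < (\<integral>w. llr mu0 mu1 w \<partial>mu1)"
    using kl0 kl1 by simp
  show "var_under mu0 (llr mu0 mu1) = (\<integral>w. (llr mu0 mu1 w)\<^sup>2 \<partial>mu0) - (\<integral>w. llr mu0 mu1 w \<partial>mu0)\<^sup>2"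
    using var_under_eq[OF m0 zm0 sq0] .
  show "var_under mu1 (llr mu0 mu1) = (\<integral>w. (llr mu0 mu1 w)\<^sup>2 \<partial>mu1) - (\<integral>w. llr mu0 mu1 w \<partial>mu1)\<^sup>2"
    using var_under_eq[OF m1 zm1 sq1] .
qed


lemma transfer:
  assumes M: "prob_space M" and mu: "prob_space mu" and se: "sets mu = sets mu0"
    and Wm: "W \<in> measurable M mu0" and A: "A \<in> sets M"
    and law: "\<forall>B\<in>sets mu0. measure M {x\<in>space M. x \<in> A \<and> W x \<in> B} = measure M A * measure mu B"
    and fm: "f \<in> borel_measurable mu" and fi: "integrable mu f"
  shows "integrable M (\<lambda>x. f (W x) * indicator A x)"
    "(\<integral>x. f (W x) * indicator A x \<partial>M) = measure M A * (\<integral>w. f w \<partial>mu)"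
proof -
  interpret PM: prob_space M by fact
  interpret Pm: prob_space mu by fact
  have Wm': "W \<in> measurable M mu" using Wm by (simp add: measurable_cong_sets[OF refl se])
  have indm[measurable]: "(\<lambda>x. indicator A x :: real) \<in> borel_measurable M" using A by simp
  define N where "N = distr (density M (\<lambda>x. ennreal (indicator A x))) mu W"
  have WmD: "W \<in> measurable (density M (\<lambda>x. ennreal (indicator A x))) mu"
    using Wm' by simp
  have eqN: "N = density mu (\<lambda>_. ennreal (measure M A))"
  proof (rule measure_eqI)
    show "sets N = sets (density mu (\<lambda>_. ennreal (measure M A)))" by (simp add: N_def)
    fix B assume "B \<in> sets N"
    then have B: "B \<in> sets mu" by (simp add: N_def)
    have pre: "W -` B \<inter> space M \<in> sets M" using Wm' B by (rule measurable_sets)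
    have "emeasure N B = emeasure (density M (\<lambda>x. ennreal (indicator A x))) (W -` B \<inter> space M)"
      unfolding N_def using B WmD by (simp add: emeasure_distr)
    also have "\<dots> = (\<integral>\<^sup>+x. ennreal (indicator A x) * indicator (W -` B \<inter> space M) x \<partial>M)"
      using pre by (simp add: emeasure_density)
    also have "\<dots> = (\<integral>\<^sup>+x. indicator {x\<in>space M. x \<in> A \<and> W x \<in> B} x \<partial>M)"
      by (intro nn_integral_cong) (auto split: split_indicator)
    also have "\<dots> = emeasure M {x\<in>space M. x \<in> A \<and> W x \<in> B}"
      using pre A by (intro nn_integral_indicator) (auto simp: Int_def conj_commute)
    also have "\<dots> = ennreal (measure M A * measure mu B)"
      using law B se by (simp add: PM.emeasure_eq_measure)
    also have "\<dots> = emeasure (density mu (\<lambda>_. ennreal (measure M A))) B"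
      using B by (simp add: emeasure_density nn_integral_cmult_indicator Pm.emeasure_eq_measure ennreal_mult)
    finally show "emeasure N B = emeasure (density mu (\<lambda>_. ennreal (measure M A))) B" .
  qed
  have fWm: "(\<lambda>x. f (W x)) \<in> borel_measurable M" using fm Wm' by measurable
  have i1: "integrable N f \<longleftrightarrow> integrable M (\<lambda>x. indicator A x *\<^sub>R f (W x))"
    unfolding N_def
    by (subst integrable_distr_eq[OF WmD fm]) (subst integrable_density, auto simp: fWm)
  have i2: "integrable N f \<longleftrightarrow> integrable mu (\<lambda>x. measure M A *\<^sub>R f x)"
    unfolding eqN by (subst integrable_density) (auto simp: fm)
  show "integrable M (\<lambda>x. f (W x) * indicator A x)"
    using i1 i2 fi by (simp add: mult.commute)
  have e1: "integral\<^sup>L N f = (\<integral>x. indicator A x *\<^sub>R f (W x) \<partial>M)"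
    unfolding N_def
    by (subst integral_distr[OF WmD fm]) (subst integral_density, auto simp: fWm)
  have e2: "integral\<^sup>L N f = (\<integral>x. measure M A *\<^sub>R f x \<partial>mu)"
    unfolding eqN by (subst integral_density) (auto simp: fm)
  show "(\<integral>x. f (W x) * indicator A x \<partial>M) = measure M A * (\<integral>w. f w \<partial>mu)"
    using e1 e2 by (simp add: mult.commute)
qed

lemma state_facts:
  fixes z :: "'b \<Rightarrow> real" and W :: "'v \<Rightarrow> 'a \<Rightarrow> 'b"
  assumes M: "prob_space M" and mu: "prob_space mu" and se: "sets mu = sets mu0"
    and zm: "z \<in> borel_measurable mu0" and zi: "integrable mu z" and zq: "integrable mu (\<lambda>w. (z w)\<^sup>2)"
    and A: "A \<in> sets M" and hA: "measure M A = 1/2"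
    and Wm: "\<forall>u\<in>V. W u \<in> measurable M mu0"
    and law: "\<forall>u\<in>V. \<forall>B\<in>sets mu0. measure M {x\<in>space M. x \<in> A \<and> W u x \<in> B} = measure M A * measure mu B"
    and unc: "\<forall>u\<in>V. \<forall>v\<in>V. u \<noteq> v \<longrightarrow> cond_cov M A (\<lambda>x. z (W u x)) (\<lambda>x. z (W v x)) = 0"
  shows "\<forall>u\<in>V. integrable M (\<lambda>x. z (W u x) * indicator A x) \<and>
            (\<integral>x. z (W u x) * indicator A x \<partial>M) = (\<integral>w. z w \<partial>mu) / 2"
    "\<forall>u\<in>V. \<forall>v\<in>V. integrable M (\<lambda>x. z (W u x) * z (W v x) * indicator A x) \<and>
        (\<integral>x. z (W u x) * z (W v x) * indicator A x \<partial>M) =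
          (if u = v then (\<integral>w. (z w)\<^sup>2 \<partial>mu) / 2 else (\<integral>w. z w \<partial>mu)\<^sup>2 / 2)"
proof -
  interpret prob_space M by fact
  have zmu: "z \<in> borel_measurable mu" using zm by (simp add: measurable_cong_sets[OF se refl])
  have zqm: "(\<lambda>w. (z w)\<^sup>2) \<in> borel_measurable mu" using zmu by measurable
  have T1: "integrable M (\<lambda>x. z (W u x) * indicator A x)"
      "(\<integral>x. z (W u x) * indicator A x \<partial>M) = (\<integral>w. z w \<partial>mu) / 2" if "u \<in> V" for u
    using transfer[OF M mu se _ A _ zmu zi, of "W u"] Wm law that hA by auto
  have T2: "integrable M (\<lambda>x. (z (W u x))\<^sup>2 * indicator A x)"
      "(\<integral>x. (z (W u x))\<^sup>2 * indicator A x \<partial>M) = (\<integral>w. (z w)\<^sup>2 \<partial>mu) / 2" if "u \<in> V" for u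
    using transfer[OF M mu se _ A _ zqm zq, of "W u"] Wm law that hA by auto
  show "\<forall>u\<in>V. integrable M (\<lambda>x. z (W u x) * indicator A x) \<and>
            (\<integral>x. z (W u x) * indicator A x \<partial>M) = (\<integral>w. z w \<partial>mu) / 2"
    using T1 by auto
  have zWm: "(\<lambda>x. z (W u x)) \<in> borel_measurable M" if "u \<in> V" for u
    using Wm that zm by (auto intro: measurable_comp)
  have cev: "cond_ev M A (\<lambda>x. z (W u x)) = (\<integral>w. z w \<partial>mu)" if "u \<in> V" for u
    using T1(2)[OF that] by (simp add: cond_ev_def hA)
  show "\<forall>u\<in>V. \<forall>v\<in>V. integrable M (\<lambda>x. z (W u x) * z (W v x) * indicator A x) \<and>
        (\<integral>x. z (W u x) * z (W v x) * indicator A x \<partial>M) =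
          (if u = v then (\<integral>w. (z w)\<^sup>2 \<partial>mu) / 2 else (\<integral>w. z w \<partial>mu)\<^sup>2 / 2)"
  proof (intro ballI)
    fix u v assume u: "u \<in> V" and v: "v \<in> V"
    show "integrable M (\<lambda>x. z (W u x) * z (W v x) * indicator A x) \<and>
        (\<integral>x. z (W u x) * z (W v x) * indicator A x \<partial>M) =
          (if u = v then (\<integral>w. (z w)\<^sup>2 \<partial>mu) / 2 else (\<integral>w. z w \<partial>mu)\<^sup>2 / 2)"
    proof (cases "u = v")
      case True
      then show ?thesis using T2[OF u] by (simp add: power2_eq_square)
    next
      case False
      have int: "integrable M (\<lambda>x. z (W u x) * z (W v x) * indicator A x)"
      proof (rule Bochner_Integration.integrable_bound)
        show "integrable M (\<lambda>x. (z (W u x))\<^sup>2 * indicator A x + (z (W v x))\<^sup>2 * indicator A x)"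
          using T2[OF u] T2[OF v] by auto
        show "(\<lambda>x. z (W u x) * z (W v x) * indicator A x) \<in> borel_measurable M"
          using zWm[OF u] zWm[OF v] A by measurable
        show "AE x in M. norm (z (W u x) * z (W v x) * indicator A x)
            \<le> norm ((z (W u x))\<^sup>2 * indicator A x + (z (W v x))\<^sup>2 * indicator A x)"
        proof (intro AE_I2)
          fix x
          have "\<bar>z (W u x) * z (W v x)\<bar> \<le> (z (W u x))\<^sup>2 + (z (W v x))\<^sup>2"
            by (rule absprod_le)
          then show "norm (z (W u x) * z (W v x) * indicator A x)
            \<le> norm ((z (W u x))\<^sup>2 * indicator A x + (z (W v x))\<^sup>2 * indicator A x)"
            by (auto split: split_indicator)
        qed
      qed
      have "cond_cov M A (\<lambda>x. z (W u x)) (\<lambda>x. z (W v x)) = 0" using unc u v False by auto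
      then have "cond_ev M A (\<lambda>x. z (W u x) * z (W v x)) = (\<integral>w. z w \<partial>mu) * (\<integral>w. z w \<partial>mu)"
        unfolding cond_cov_def using cev[OF u] cev[OF v] by simp
      then have "(\<integral>x. z (W u x) * z (W v x) * indicator A x \<partial>M) = (\<integral>w. z w \<partial>mu)\<^sup>2 / 2"
        unfolding cond_ev_def hA by (simp add: power2_eq_square)
      then show ?thesis using int False by simp
    qed
  qed
qed


lemma orth:
  assumes M: "prob_space M" and sub: "subalgebra M F"
    and gm: "g \<in> borel_measurable M" and gb: "\<And>x. \<bar>g x\<bar> \<le> 1"
    and hm: "h \<in> borel_measurable F" and hi: "integrable M h"
    and Xm: "X \<in> borel_measurable M"
    and XY: "AE x in M. X x = real_cond_exp M F g x"
  shows "integrable M (\<lambda>x. h x * X x)" "(\<integral>x. h x * X x \<partial>M) = (\<integral>x. h x * g x \<partial>M)"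
    "integrable M (\<lambda>x. h x * g x)"
proof -
  interpret prob_space M by fact
  interpret finite_measure_subalgebra M F
    using sub by unfold_locales
  have hmM: "h \<in> borel_measurable M" using measurable_from_subalg[OF sub hm] .
  have ihg: "integrable M (\<lambda>x. h x * g x)"
  proof (rule Bochner_Integration.integrable_bound[OF hi])
    show "(\<lambda>x. h x * g x) \<in> borel_measurable M" using hmM gm by measurable
    show "AE x in M. norm (h x * g x) \<le> norm (h x)"
      using gb by (auto simp: abs_mult intro!: mult_left_le)
  qed
  have r1: "integrable M (\<lambda>x. h x * real_cond_exp M F g x)"
    and r2: "(\<integral>x. h x * real_cond_exp M F g x \<partial>M) = (\<integral>x. h x * g x \<partial>M)"
    using real_cond_exp_intg[OF ihg hm gm] by auto
  have ae: "AE x in M. h x * X x = h x * real_cond_exp M F g x" using XY by auto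
  have m1: "(\<lambda>x. h x * X x) \<in> borel_measurable M" using hmM Xm by measurable
  show "integrable M (\<lambda>x. h x * X x)"
    using integrable_cong_AE[OF m1 _ ae] r1 by simp
  show "(\<integral>x. h x * X x \<partial>M) = (\<integral>x. h x * g x \<partial>M)"
    using integral_cong_AE[OF m1 _ ae] r2 hmM by simp
  show "integrable M (\<lambda>x. h x * g x)" by (rule ihg)
qed


lemma state_int:
  fixes z :: "'v \<Rightarrow> 'a \<Rightarrow> real"
  assumes M: "prob_space M" and fin: "finite V" and A: "A \<in> sets M"
    and hA: "measure M A = 1/2"
    and hz: "\<forall>u\<in>V. integrable M (\<lambda>x. z u x * indicator A x) \<and> (\<integral>x. z u x * indicator A x \<partial>M) = m/2"
    and hzz: "\<forall>u\<in>V. \<forall>v\<in>V. integrable M (\<lambda>x. z u x * z v x * indicator A x) \<and>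
        (\<integral>x. z u x * z v x * indicator A x \<partial>M) = (if u = v then q/2 else m\<^sup>2/2)"
  shows "integrable M (\<lambda>x. (t - c * (\<Sum>u\<in>V. z u x))\<^sup>2 * indicator A x)"
    "(\<integral>x. (t - c * (\<Sum>u\<in>V. z u x))\<^sup>2 * indicator A x \<partial>M)
      = (1/2) * (t\<^sup>2 - 2 * t * c * real (card V) * m + c\<^sup>2 * (real (card V) * q + ((real (card V))\<^sup>2 - real (card V)) * m\<^sup>2))"
proof -
  interpret prob_space M by fact
  let ?n = "real (card V)"
  have pw: "(t - c * (\<Sum>u\<in>V. z u x))\<^sup>2 * indicator A x =
      t\<^sup>2 * indicator A x - 2 * t * c * (\<Sum>u\<in>V. z u x * indicator A x)
      + c\<^sup>2 * (\<Sum>u\<in>V. \<Sum>v\<in>V. z u x * z v x * indicator A x)" for x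
  proof -
    have "(\<Sum>u\<in>V. z u x)\<^sup>2 = (\<Sum>u\<in>V. \<Sum>v\<in>V. z u x * z v x)"
      by (simp add: power2_eq_square sum_product)
    then have sq: "(\<Sum>u\<in>V. \<Sum>v\<in>V. z u x * z v x * indicator A x) = (\<Sum>u\<in>V. z u x)\<^sup>2 * indicator A x"
      by (simp add: sum_distrib_right)
    show ?thesis unfolding sq sum_distrib_right[symmetric]
      by (simp add: power2_eq_square algebra_simps sum_product)
  qed
  have iA: "integrable M (\<lambda>x. indicator A x :: real)" using A by (intro integrable_real_indicator) (auto simp: emeasure_eq_measure)
  have i1: "integrable M (\<lambda>x. \<Sum>u\<in>V. z u x * indicator A x)"
    using hz by (intro Bochner_Integration.integrable_sum) auto
  have i2: "integrable M (\<lambda>x. \<Sum>u\<in>V. \<Sum>v\<in>V. z u x * z v x * indicator A x)"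
    using hzz by (intro Bochner_Integration.integrable_sum) auto
  have iall: "integrable M (\<lambda>x. t\<^sup>2 * indicator A x - 2 * t * c * (\<Sum>u\<in>V. z u x * indicator A x)
      + c\<^sup>2 * (\<Sum>u\<in>V. \<Sum>v\<in>V. z u x * z v x * indicator A x))"
    using iA i1 i2 by auto
  then show "integrable M (\<lambda>x. (t - c * (\<Sum>u\<in>V. z u x))\<^sup>2 * indicator A x)"
    unfolding pw .
  have s1: "(\<integral>x. (\<Sum>u\<in>V. z u x * indicator A x) \<partial>M) = ?n * (m/2)"
  proof -
    have "(\<integral>x. (\<Sum>u\<in>V. z u x * indicator A x) \<partial>M) = (\<Sum>u\<in>V. (\<integral>x. z u x * indicator A x \<partial>M))"
      using hz by (intro Bochner_Integration.integral_sum) auto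
    also have "\<dots> = (\<Sum>u\<in>V. m/2)" using hz by (intro sum.cong) auto
    finally show ?thesis by simp
  qed
  have inner: "(\<Sum>v\<in>V. (if u = v then q/2 else m\<^sup>2/2)) = ?n * (m\<^sup>2/2) + (q - m\<^sup>2)/2" if "u \<in> V" for u
  proof -
    have "(\<Sum>v\<in>V. (if u = v then q/2 else m\<^sup>2/2)) = (\<Sum>v\<in>V. m\<^sup>2/2 + (if u = v then (q - m\<^sup>2)/2 else 0))"
      by (intro sum.cong) (auto simp: field_simps)
    also have "\<dots> = ?n * (m\<^sup>2/2) + (q - m\<^sup>2)/2"
      using that fin by (simp add: sum.distrib)
    finally show ?thesis .
  qed
  have s2: "(\<integral>x. (\<Sum>u\<in>V. \<Sum>v\<in>V. z u x * z v x * indicator A x) \<partial>M) = ?n * (?n * (m\<^sup>2/2) + (q - m\<^sup>2)/2)"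
  proof -
    have "(\<integral>x. (\<Sum>u\<in>V. \<Sum>v\<in>V. z u x * z v x * indicator A x) \<partial>M)
        = (\<Sum>u\<in>V. \<Sum>v\<in>V. (\<integral>x. z u x * z v x * indicator A x \<partial>M))"
      using hzz by (simp add: Bochner_Integration.integral_sum Bochner_Integration.integrable_sum)
    also have "\<dots> = (\<Sum>u\<in>V. \<Sum>v\<in>V. (if u = v then q/2 else m\<^sup>2/2))"
      using hzz by (intro sum.cong) auto
    also have "\<dots> = (\<Sum>u\<in>V. ?n * (m\<^sup>2/2) + (q - m\<^sup>2)/2)"
      using inner by (intro sum.cong) auto
    finally show ?thesis by simp
  qed
  have "(\<integral>x. (t - c * (\<Sum>u\<in>V. z u x))\<^sup>2 * indicator A x \<partial>M)
      = t\<^sup>2 * measure M A - 2 * t * c * (?n * (m/2)) + c\<^sup>2 * (?n * (?n * (m\<^sup>2/2) + (q - m\<^sup>2)/2))"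
    unfolding pw using iA i1 i2 s1 s2 A by (simp add: integral_add integral_diff)
  then show "(\<integral>x. (t - c * (\<Sum>u\<in>V. z u x))\<^sup>2 * indicator A x \<partial>M)
      = (1/2) * (t\<^sup>2 - 2 * t * c * ?n * m + c\<^sup>2 * (?n * q + (?n\<^sup>2 - ?n) * m\<^sup>2))"
  proof -
    assume E: "(\<integral>x. (t - c * (\<Sum>u\<in>V. z u x))\<^sup>2 * indicator A x \<partial>M)
      = t\<^sup>2 * measure M A - 2 * t * c * (?n * (m/2)) + c\<^sup>2 * (?n * (?n * (m\<^sup>2/2) + (q - m\<^sup>2)/2))"
    have "t\<^sup>2 * measure M A - 2 * t * c * (?n * (m/2)) + c\<^sup>2 * (?n * (?n * (m\<^sup>2/2) + (q - m\<^sup>2)/2))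
       = (1/2) * (t\<^sup>2 - 2 * t * c * ?n * m + c\<^sup>2 * (?n * q + (?n\<^sup>2 - ?n) * m\<^sup>2))"
      unfolding hA by (simp add: power2_eq_square field_simps)
    then show ?thesis using E by simp
  qed
qed


lemma alg:
  fixes n m0 m1 q0 q1 :: real
  assumes n: "n \<ge> 1" and d: "m0 < m1" and s0: "m0\<^sup>2 \<le> q0" and s1: "m1\<^sup>2 \<le> q1"
  defines "D \<equiv> 2 * ((q1 - m1\<^sup>2) + (q0 - m0\<^sup>2)) / (m1 - m0)\<^sup>2"
  defines "c \<equiv> 1 / ((n + D) * (m1 - m0))"
  defines "a \<equiv> 1/2 - c * n * (m0 + m1) / 2"
  shows "(1/2) * ((1 - a)\<^sup>2 - 2 * (1 - a) * c * n * m1 + c\<^sup>2 * (n * q1 + (n\<^sup>2 - n) * m1\<^sup>2))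
       + (1/2) * ((- a)\<^sup>2 - 2 * (- a) * c * n * m0 + c\<^sup>2 * (n * q0 + (n\<^sup>2 - n) * m0\<^sup>2))
       \<le> D / (n + D)"
proof -
  define d where "d = m1 - m0"
  define s where "s = (q1 - m1\<^sup>2) + (q0 - m0\<^sup>2)"
  have dp: "d > 0" using d by (simp add: d_def)
  have sp: "s \<ge> 0" using s0 s1 by (simp add: s_def)
  have Dd: "D = 2 * s / d\<^sup>2" by (simp add: D_def s_def d_def)
  have Dp: "D \<ge> 0" using sp dp by (simp add: Dd)
  have nD: "n + D > 0" using n Dp by simp
  have cd: "c * d = 1 / (n + D)" using dp nD by (simp add: c_def d_def)
  have e1: "1 - a - c * n * m1 = 1/2 - c * n * d / 2" by (simp add: a_def d_def field_simps)
  have e0: "a + c * n * m0 = 1/2 - c * n * d / 2" by (simp add: a_def d_def field_simps)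
  have lhs: "(1/2) * ((1 - a)\<^sup>2 - 2 * (1 - a) * c * n * m1 + c\<^sup>2 * (n * q1 + (n\<^sup>2 - n) * m1\<^sup>2))
       + (1/2) * ((- a)\<^sup>2 - 2 * (- a) * c * n * m0 + c\<^sup>2 * (n * q0 + (n\<^sup>2 - n) * m0\<^sup>2))
     = (1/2) * ((1 - a - c * n * m1)\<^sup>2 + (a + c * n * m0)\<^sup>2) + c\<^sup>2 * n * s / 2"
    by (simp add: s_def power2_eq_square field_simps)
  also have "\<dots> = (1/2) * ((1/2 - c * n * d / 2)\<^sup>2 + (1/2 - c * n * d / 2)\<^sup>2) + c\<^sup>2 * n * s / 2"
    by (simp only: e1 e0)
  also have "\<dots> = (1/2 - c * n * d / 2)\<^sup>2 + (c * d)\<^sup>2 * n * (s / d\<^sup>2) / 2"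
    using dp by (simp add: power2_eq_square field_simps)
  also have "\<dots> = (1/2 - n * (c * d) / 2)\<^sup>2 + (c * d)\<^sup>2 * n * D / 4"
    by (simp add: Dd algebra_simps)
  also have "\<dots> = (D / (2 * (n + D)))\<^sup>2 + (1 / (n + D))\<^sup>2 * n * D / 4"
  proof -
    have "1/2 - n * (c * d) / 2 = D / (2 * (n + D))" using nD by (simp add: cd field_simps)
    then show ?thesis by (simp add: cd)
  qed
  also have "\<dots> = (D * (D + n)) / (4 * (n + D)\<^sup>2)"
    using nD by (simp add: power2_eq_square field_simps add_divide_distrib[symmetric])
  also have "\<dots> = D / (4 * (n + D))"
    using nD by (simp add: power2_eq_square add.commute)
  also have "\<dots> \<le> D / (n + D)"
    using nD Dp by (simp add: divide_le_cancel frac_le)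
  finally show ?thesis .
qed

theorem mainTheorem3:
  fixes M :: "'a measure" and S :: "'a \<Rightarrow> real"
    and mu0 mu1 :: "'b measure"
    and V :: "'v set" and W :: "'v \<Rightarrow> 'a \<Rightarrow> 'b"
    and F :: "'v \<Rightarrow> 'a measure" and X :: "'a \<Rightarrow> real"
  assumes M: "prob_space M"
    and S_meas: "S \<in> borel_measurable M"
    and S_vals: "\<forall>x\<in>space M. S x \<in> {0, 1}"
    and S_unif: "measure M {x\<in>space M. S x = 1} = 1 / 2"
    and mu0: "prob_space mu0" and mu1: "prob_space mu1"
    and sets_eq: "sets mu1 = sets mu0"
    and neq: "mu0 \<noteq> mu1"
    and ac01: "absolutely_continuous mu0 mu1"
    and ac10: "absolutely_continuous mu1 mu0"
    and sq0: "integrable mu0 (\<lambda>w. (llr mu0 mu1 w)\<^sup>2)"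
    and sq1: "integrable mu1 (\<lambda>w. (llr mu0 mu1 w)\<^sup>2)"
    and V_fin: "finite V" and V_ne: "V \<noteq> {}"
    and W_meas: "\<forall>u\<in>V. W u \<in> measurable M mu0"
    and W_law: "\<forall>u\<in>V. \<forall>A\<in>sets mu0.
        measure M {x\<in>space M. S x = 0 \<and> W u x \<in> A} = measure M {x\<in>space M. S x = 0} * measure mu0 A
      \<and> measure M {x\<in>space M. S x = 1 \<and> W u x \<in> A} = measure M {x\<in>space M. S x = 1} * measure mu1 A"
    and uncorr: "\<forall>u\<in>V. \<forall>v\<in>V. u \<noteq> v \<longrightarrow> (\<forall>s\<in>{0::real, 1}.
        cond_cov M {x\<in>space M. S x = s}
          (\<lambda>x. llr mu0 mu1 (W u x)) (\<lambda>x. llr mu0 mu1 (W v x)) = 0)"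
    and F_sub: "\<forall>u\<in>V. subalgebra M (F u)"
    and F_lower: "\<forall>u\<in>V. sets (vimage_algebra (space M) (W u) mu0) \<subseteq> sets (F u)"
    and F_upper: "\<forall>u\<in>V. sets (F u) \<subseteq>
        sigma_sets (space M) (\<Union>v\<in>V. {W v -` A \<inter> space M | A. A \<in> sets mu0})"
    and common_knowledge: "\<forall>u\<in>V. \<forall>w\<in>V. \<exists>g\<in>borel_measurable (F w).
        AE x in M. real_cond_exp M (F u) (indicator {y\<in>space M. S y = 1}) x = g x"
    and X_meas: "X \<in> borel_measurable M"
    and X_agree: "AE x in M. \<forall>u\<in>V. X x = real_cond_exp M (F u) (indicator {y\<in>space M. S y = 1}) x"
  shows "prob_space.variance M (\<lambda>x. X x - S x)
           \<le> noise_signal_ratio mu1 mu0 / (real (card V) + noise_signal_ratio mu1 mu0)"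
proof -
  interpret P: prob_space M by (rule M)
  note S_meas[measurable]
  define z where "z = llr mu0 mu1"
  define A0 where "A0 = {x\<in>space M. S x = 0}"
  define A1 where "A1 = {x\<in>space M. S x = 1}"
  have A0s[measurable]: "A0 \<in> sets M" unfolding A0_def by measurable
  have A1s[measurable]: "A1 \<in> sets M" unfolding A1_def by measurable
  have pA1: "measure M A1 = 1/2" using S_unif by (simp add: A1_def)
  have A0eq: "A0 = space M - A1" using S_vals by (auto simp: A0_def A1_def)
  have pA0: "measure M A0 = 1/2" unfolding A0eq using P.prob_compl[OF A1s] pA1 by simp
  note mf = mu_facts[OF mu0 mu1 sets_eq neq ac01 ac10 sq0 sq1, folded z_def]
  define m0 where "m0 = (\<integral>w. z w \<partial>mu0)"
  define m1 where "m1 = (\<integral>w. z w \<partial>mu1)"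
  define q0 where "q0 = (\<integral>w. (z w)\<^sup>2 \<partial>mu0)"
  define q1 where "q1 = (\<integral>w. (z w)\<^sup>2 \<partial>mu1)"
  have sq0': "integrable mu0 (\<lambda>w. (z w)\<^sup>2)" using sq0 by (simp add: z_def)
  have sq1': "integrable mu1 (\<lambda>w. (z w)\<^sup>2)" using sq1 by (simp add: z_def)
  have law0: "\<forall>u\<in>V. \<forall>B\<in>sets mu0. measure M {x\<in>space M. x \<in> A0 \<and> W u x \<in> B} = measure M A0 * measure mu0 B"
    using W_law by (auto simp: A0_def)
  have law1: "\<forall>u\<in>V. \<forall>B\<in>sets mu0. measure M {x\<in>space M. x \<in> A1 \<and> W u x \<in> B} = measure M A1 * measure mu1 B"
    using W_law by (auto simp: A1_def)
  have unc0: "\<forall>u\<in>V. \<forall>v\<in>V. u \<noteq> v \<longrightarrow> cond_cov M A0 (\<lambda>x. z (W u x)) (\<lambda>x. z (W v x)) = 0"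
    using uncorr by (auto simp: A0_def z_def)
  have unc1: "\<forall>u\<in>V. \<forall>v\<in>V. u \<noteq> v \<longrightarrow> cond_cov M A1 (\<lambda>x. z (W u x)) (\<lambda>x. z (W v x)) = 0"
    using uncorr by (auto simp: A1_def z_def)
  note st0 = state_facts[OF M mu0 refl mf(1) mf(3) sq0' A0s pA0 W_meas law0 unc0, folded m0_def q0_def]
  note st1 = state_facts[OF M mu1 sets_eq mf(1) mf(4) sq1' A1s pA1 W_meas law1 unc1, folded m1_def q1_def]
  define n where "n = real (card V)"
  have n1: "n \<ge> 1" using V_fin V_ne card_gt_0_iff[of V] by (simp add: n_def)
  have v0: "m0\<^sup>2 \<le> q0"
  proof -
    have "0 \<le> var_under mu0 z" unfolding var_under_def by simp
    then show ?thesis using mf(8) by (simp add: m0_def q0_def z_def)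
  qed
  have v1: "m1\<^sup>2 \<le> q1"
  proof -
    have "0 \<le> var_under mu1 z" unfolding var_under_def by simp
    then show ?thesis using mf(9) by (simp add: m1_def q1_def z_def)
  qed
  have dlt: "m0 < m1" using mf(7) by (simp add: m0_def m1_def)
  define D where "D = 2 * ((q1 - m1\<^sup>2) + (q0 - m0\<^sup>2)) / (m1 - m0)\<^sup>2"
  define c where "c = 1 / ((n + D) * (m1 - m0))"
  define a where "a = 1/2 - c * n * (m0 + m1) / 2"
  have DN: "noise_signal_ratio mu1 mu0 = D"
    unfolding noise_signal_ratio_def D_def using mf(5,6,8,9)
    by (simp add: m0_def m1_def q0_def q1_def z_def)
  have algr: "(1/2) * ((1 - a)\<^sup>2 - 2 * (1 - a) * c * n * m1 + c\<^sup>2 * (n * q1 + (n\<^sup>2 - n) * m1\<^sup>2))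
       + (1/2) * ((- a)\<^sup>2 - 2 * (- a) * c * n * m0 + c\<^sup>2 * (n * q0 + (n\<^sup>2 - n) * m0\<^sup>2))
       \<le> D / (n + D)"
    unfolding a_def c_def D_def by (rule alg[OF n1 dlt v0 v1])
  define Z where "Z x = (\<Sum>u\<in>V. z (W u x))" for x
  define g where "g x = a + c * Z x" for x
  have si1: "integrable M (\<lambda>x. ((1 - a) - c * Z x)\<^sup>2 * indicator A1 x)"
    "(\<integral>x. ((1 - a) - c * Z x)\<^sup>2 * indicator A1 x \<partial>M) =
      (1/2) * ((1 - a)\<^sup>2 - 2 * (1 - a) * c * n * m1 + c\<^sup>2 * (n * q1 + (n\<^sup>2 - n) * m1\<^sup>2))"
    using state_int[OF M V_fin A1s pA1 st1, of "1 - a" c] by (simp_all add: Z_def n_def)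
  have si0: "integrable M (\<lambda>x. ((- a) - c * Z x)\<^sup>2 * indicator A0 x)"
    "(\<integral>x. ((- a) - c * Z x)\<^sup>2 * indicator A0 x \<partial>M) =
      (1/2) * ((- a)\<^sup>2 - 2 * (- a) * c * n * m0 + c\<^sup>2 * (n * q0 + (n\<^sup>2 - n) * m0\<^sup>2))"
    using state_int[OF M V_fin A0s pA0 st0, of "- a" c] by (simp_all add: Z_def n_def)
  define I1 where "I1 x = (indicator A1 x :: real)" for x
  have SI: "S x = I1 x" if "x \<in> space M" for x
    using S_vals that by (auto simp: I1_def A1_def)
  have gsq: "(I1 x - g x)\<^sup>2 = ((1 - a) - c * Z x)\<^sup>2 * indicator A1 x + ((- a) - c * Z x)\<^sup>2 * indicator A0 x"
    if "x \<in> space M" for x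
    using that A0eq by (auto simp: I1_def g_def algebra_simps split: split_indicator)
  have gint: "integrable M (\<lambda>x. (I1 x - g x)\<^sup>2)"
    using si0(1) si1(1) by (subst Bochner_Integration.integrable_cong[OF refl gsq]) auto
  have gval: "(\<integral>x. (I1 x - g x)\<^sup>2 \<partial>M) \<le> D / (n + D)"
  proof -
    have "(\<integral>x. (I1 x - g x)\<^sup>2 \<partial>M) = (\<integral>x. ((1 - a) - c * Z x)\<^sup>2 * indicator A1 x + ((- a) - c * Z x)\<^sup>2 * indicator A0 x \<partial>M)"
      by (rule Bochner_Integration.integral_cong[OF refl gsq])
    also have "\<dots> = (\<integral>x. ((1 - a) - c * Z x)\<^sup>2 * indicator A1 x \<partial>M) + (\<integral>x. ((- a) - c * Z x)\<^sup>2 * indicator A0 x \<partial>M)"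
      using si0(1) si1(1) by (rule Bochner_Integration.integral_add[rotated])
    finally show ?thesis using si0(2) si1(2) algr by linarith
  qed
  have I1eq: "indicator {y\<in>space M. S y = 1} = I1" by (simp add: fun_eq_iff I1_def A1_def)
  have I1m[measurable]: "I1 \<in> borel_measurable M" unfolding I1_def by measurable
  have I1b: "\<And>x. \<bar>I1 x\<bar> \<le> 1" by (simp add: I1_def)
  have I1i: "integrable M I1" unfolding I1_def
    by (intro integrable_real_indicator) (auto simp: P.emeasure_eq_measure)
  have XA: "AE x in M. X x = real_cond_exp M (F u) I1 x" if "u \<in> V" for u
    using X_agree that unfolding I1eq by auto
  have WF: "W u \<in> measurable (F u) mu0" if u: "u \<in> V" for u
  proof -
    have Wsp: "W u \<in> space M \<rightarrow> space mu0" using W_meas u by (auto simp: measurable_def)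
    have wv: "W u \<in> measurable (vimage_algebra (space M) (W u) mu0) mu0"
      using Wsp by (rule measurable_vimage_algebra1)
    have sp: "space (F u) = space M" using F_sub u by (simp add: subalgebra_def)
    have sub: "sets (vimage_algebra (space M) (W u) mu0) \<subseteq> sets (F u)" using F_lower u by blast
    show ?thesis unfolding measurable_def
    proof (intro CollectI conjI ballI)
      show "W u \<in> space (F u) \<rightarrow> space mu0" using Wsp sp by simp
      fix y assume y: "y \<in> sets mu0"
      have "W u -` y \<inter> space (vimage_algebra (space M) (W u) mu0) \<in> sets (vimage_algebra (space M) (W u) mu0)"
        using measurable_sets[OF wv y] .
      then show "W u -` y \<inter> space (F u) \<in> sets (F u)" using sub sp by auto
    qed
  qed
  have zF: "(\<lambda>x. z (W u x)) \<in> borel_measurable (F u)" if "u \<in> V" for u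
    using WF[OF that] mf(1) by (rule measurable_comp[unfolded comp_def])
  have zM: "(\<lambda>x. z (W u x)) \<in> borel_measurable M" if "u \<in> V" for u
  proof -
    have su: "subalgebra M (F u)" using F_sub that by blast
    show ?thesis using measurable_from_subalg[OF su zF[OF that]] .
  qed
  have zi: "integrable M (\<lambda>x. z (W u x))" if u: "u \<in> V" for u
  proof -
    have "integrable M (\<lambda>x. z (W u x) * indicator A0 x + z (W u x) * indicator A1 x)"
      using st0(1) st1(1) u by auto
    moreover have "z (W u x) * indicator A0 x + z (W u x) * indicator A1 x = z (W u x)" if "x \<in> space M" for x
      using that A0eq by (auto split: split_indicator)
    ultimately show ?thesis by (simp cong: Bochner_Integration.integrable_cong)
  qed
  obtain u0 where u0: "u0 \<in> V" using V_ne by blast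
  define Y0 where "Y0 = real_cond_exp M (F u0) I1"
  interpret FS: finite_measure_subalgebra M "F u0" using F_sub u0 by unfold_locales blast
  have Y0F: "Y0 \<in> borel_measurable (F u0)" unfolding Y0_def by simp
  have Y0i: "integrable M Y0" unfolding Y0_def using I1i by (rule FS.real_cond_exp_int)
  have subu0: "subalgebra M (F u0)" using F_sub u0 by blast
  have hm1: "(\<lambda>_. 1::real) \<in> borel_measurable (F u0)" by simp
  have hi1: "integrable M (\<lambda>_. 1::real)" by simp
  note o1 = orth[OF M subu0 I1m I1b hm1 hi1 X_meas XA[OF u0]]
  note o2 = orth[OF M subu0 I1m I1b Y0F Y0i X_meas XA[OF u0]]
  have o1': "integrable M X" "(\<integral>x. X x \<partial>M) = (\<integral>x. I1 x \<partial>M)"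
    using o1(1,2) by simp_all
  have o2': "integrable M (\<lambda>x. Y0 x * X x)" "(\<integral>x. Y0 x * X x \<partial>M) = (\<integral>x. Y0 x * I1 x \<partial>M)"
      "integrable M (\<lambda>x. Y0 x * I1 x)"
    using o2 by simp_all
  have aeY: "AE x in M. Y0 x = X x" using XA[OF u0] by (auto simp: Y0_def)
  have XXm: "(\<lambda>x. X x * X x) \<in> borel_measurable M" "(\<lambda>x. X x * I1 x) \<in> borel_measurable M"
    using X_meas by measurable
  have ae1: "AE x in M. Y0 x * X x = X x * X x" using aeY by auto
  have ae2: "AE x in M. Y0 x * I1 x = X x * I1 x" using aeY by auto
  have Y0m: "Y0 \<in> borel_measurable M" using measurable_from_subalg[OF subu0 Y0F] .
  have Y0X: "(\<lambda>x. Y0 x * X x) \<in> borel_measurable M" "(\<lambda>x. Y0 x * I1 x) \<in> borel_measurable M"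
    using Y0m X_meas by measurable
  have XXi: "integrable M (\<lambda>x. X x * X x)"
    using integrable_cong_AE[OF Y0X(1) XXm(1) ae1] o2'(1) by simp
  have XIi: "integrable M (\<lambda>x. X x * I1 x)"
    using integrable_cong_AE[OF Y0X(2) XXm(2) ae2] o2'(3) by simp
  have XXe: "(\<integral>x. X x * X x \<partial>M) = (\<integral>x. X x * I1 x \<partial>M)"
    using integral_cong_AE[OF Y0X(1) XXm(1) ae1] integral_cong_AE[OF Y0X(2) XXm(2) ae2] o2'(2) by simp
  have o3: "integrable M (\<lambda>x. z (W u x) * X x)" "(\<integral>x. z (W u x) * X x \<partial>M) = (\<integral>x. z (W u x) * I1 x \<partial>M)"
      "integrable M (\<lambda>x. z (W u x) * I1 x)" if u: "u \<in> V" for u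
  proof -
    have su: "subalgebra M (F u)" using F_sub u by blast
    show "integrable M (\<lambda>x. z (W u x) * X x)" "(\<integral>x. z (W u x) * X x \<partial>M) = (\<integral>x. z (W u x) * I1 x \<partial>M)"
      "integrable M (\<lambda>x. z (W u x) * I1 x)"
      using orth[OF M su I1m I1b zF[OF u] zi[OF u] X_meas XA[OF u]] by simp_all
  qed
  have pw: "(I1 x - X x) * (X x - g x) = (X x * I1 x - X x * X x) - a * (I1 x - X x)
      - c * (\<Sum>u\<in>V. z (W u x) * I1 x - z (W u x) * X x)" for x
  proof -
    have "(\<Sum>u\<in>V. z (W u x) * I1 x - z (W u x) * X x) = Z x * (I1 x - X x)"
      by (simp add: Z_def sum_distrib_right right_diff_distrib sum_subtractf)
    then show ?thesis by (subst \<open>_ = Z x * (I1 x - X x)\<close>) (simp add: g_def algebra_simps)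
  qed
  have si: "integrable M (\<lambda>x. \<Sum>u\<in>V. z (W u x) * I1 x - z (W u x) * X x)"
    using o3 by (intro Bochner_Integration.integrable_sum) auto
  have sI: "(\<integral>x. (\<Sum>u\<in>V. z (W u x) * I1 x - z (W u x) * X x) \<partial>M) = 0"
  proof -
    have "(\<integral>x. (\<Sum>u\<in>V. z (W u x) * I1 x - z (W u x) * X x) \<partial>M)
        = (\<Sum>u\<in>V. (\<integral>x. z (W u x) * I1 x - z (W u x) * X x \<partial>M))"
      using o3 by (intro Bochner_Integration.integral_sum) auto
    also have "\<dots> = (\<Sum>u\<in>V. 0)"
      using o3 by (intro sum.cong) auto
    finally show ?thesis by simp
  qed
  have crossi: "integrable M (\<lambda>x. (I1 x - X x) * (X x - g x))"
    unfolding pw using XIi XXi I1i o1'(1) si by auto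
  have cross0: "(\<integral>x. (I1 x - X x) * (X x - g x) \<partial>M) = 0"
    unfolding pw using XIi XXi I1i o1'(1) si sI XXe o1'(2) by simp
  have sqeq: "(I1 x - X x)\<^sup>2 = I1 x - 2 * (X x * I1 x) + X x * X x" for x
    by (simp add: I1_def power2_eq_square algebra_simps split: split_indicator)
  have sqi: "integrable M (\<lambda>x. (I1 x - X x)\<^sup>2)"
    unfolding sqeq using I1i XIi XXi by auto
  have E2: "(\<integral>x. (I1 x - X x)\<^sup>2 \<partial>M) \<le> (\<integral>x. (I1 x - g x)\<^sup>2 \<partial>M)"
  proof -
    have "(\<integral>x. (I1 x - X x)\<^sup>2 + 2 * ((I1 x - X x) * (X x - g x)) \<partial>M) \<le> (\<integral>x. (I1 x - g x)\<^sup>2 \<partial>M)"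
    proof (rule integral_mono)
      show "integrable M (\<lambda>x. (I1 x - X x)\<^sup>2 + 2 * ((I1 x - X x) * (X x - g x)))"
        using sqi crossi by auto
      show "integrable M (\<lambda>x. (I1 x - g x)\<^sup>2)" by (rule gint)
      fix x
      have "(I1 x - g x)\<^sup>2 = (I1 x - X x)\<^sup>2 + 2 * ((I1 x - X x) * (X x - g x)) + (X x - g x)\<^sup>2"
        by (simp add: power2_eq_square algebra_simps)
      then show "(I1 x - X x)\<^sup>2 + 2 * ((I1 x - X x) * (X x - g x)) \<le> (I1 x - g x)\<^sup>2"
        by simp
    qed
    moreover have "(\<integral>x. (I1 x - X x)\<^sup>2 + 2 * ((I1 x - X x) * (X x - g x)) \<partial>M) = (\<integral>x. (I1 x - X x)\<^sup>2 \<partial>M)"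
      using sqi crossi cross0 by simp
    ultimately show ?thesis by simp
  qed
  have ES: "(\<integral>x. X x - S x \<partial>M) = 0"
  proof -
    have "(\<integral>x. X x - S x \<partial>M) = (\<integral>x. X x - I1 x \<partial>M)"
      by (intro Bochner_Integration.integral_cong) (auto simp: SI)
    also have "\<dots> = 0" using o1' I1i by simp
    finally show ?thesis .
  qed
  have "prob_space.variance M (\<lambda>x. X x - S x) = (\<integral>x. (I1 x - X x)\<^sup>2 \<partial>M)"
    unfolding ES by (intro Bochner_Integration.integral_cong) (auto simp: SI power2_commute)
  also have "\<dots> \<le> D / (n + D)" using E2 gval by linarith
  finally show ?thesis by (simp add: DN n_def)
qed

end
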